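(* For all integers $k\ge 1$ and $t\ge 1$, $$B_0(k,2t)+B_1(k+1,2t+1)=B_0(k,2t-2k)+p_{de}(2t-k)+p_{do}(2t-2k).$$
   Context: For a partition $\pi$, $s(\pi)$ is its smallest part. For $j\ge1$, $\mathrm{Spt}j_{do}(n)$ is the set of partitions $\pi$ of $n$ in which $s(\pi)$ occurs exactly $j$ times and the remaining parts (those larger than $s(\pi)$) are pairwise distinct and each has parity different from that of $s(\pi)$. $B_0(j,n)$ (resp. $B_1(j,n)$) is the number of $\pi\in\mathrm{Spt}j_{do}(n)$ whose number of parts greater than $s(\pi)$ is even (resp. odd); $B_0(j,n)=B_1(j,n)=0$ for $n\le 0$. $p_{de}(n)$ (resp. $p_{do}(n)$) is the number of partitions of $n$ into distinct even (resp. distinct odd) parts, with value $1$ at $n=0$ and $0$ for $n<0$. *)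

theory Defs
  imports Main "HOL-Library.Multiset"
begin

definition partitions :: "nat \<Rightarrow> nat multiset set" where
  "partitions n = {\<pi>. (\<forall>p\<in>#\<pi>. 0 < p) \<and> sum_mset \<pi> = n}"

text \<open>Smallest part s(pi) (meaningful for nonempty pi).\<close>
definition spart :: "nat multiset \<Rightarrow> nat" where
  "spart \<pi> = Min (set_mset \<pi>)"

definition spt_do :: "nat \<Rightarrow> nat \<Rightarrow> nat multiset set" where
  "spt_do j n = {\<pi> \<in> partitions n. \<pi> \<noteq> {#} \<and> count \<pi> (spart \<pi>) = j \<and>
     (\<forall>p\<in>#\<pi>. spart \<pi> < p \<longrightarrow> count \<pi> p = 1 \<and> (odd p \<longleftrightarrow> \<not> odd (spart \<pi>)))}"

definition large_parts :: "nat multiset \<Rightarrow> nat" where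
  "large_parts \<pi> = size (filter_mset (\<lambda>p. spart \<pi> < p) \<pi>)"

definition B0 :: "nat \<Rightarrow> int \<Rightarrow> nat" where
  "B0 j n = (if n \<le> 0 then 0 else card {\<pi> \<in> spt_do j (nat n). even (large_parts \<pi>)})"

definition B1 :: "nat \<Rightarrow> int \<Rightarrow> nat" where
  "B1 j n = (if n \<le> 0 then 0 else card {\<pi> \<in> spt_do j (nat n). odd (large_parts \<pi>)})"

text \<open>Partitions into distinct even / distinct odd parts (1 at n = 0, 0 for n < 0).\<close>
definition p_de :: "int \<Rightarrow> nat" where
  "p_de n = (if n < 0 then 0 else
     card {\<pi> \<in> partitions (nat n). \<forall>p\<in>#\<pi>. even p \<and> count \<pi> p = 1})"

definition p_do :: "int \<Rightarrow> nat" where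
  "p_do n = (if n < 0 then 0 else
     card {\<pi> \<in> partitions (nat n). \<forall>p\<in>#\<pi>. odd p \<and> count \<pi> p = 1})"

end

theory Submission
  imports Defs
begin


definition AA :: "nat \<Rightarrow> nat \<Rightarrow> (nat \<Rightarrow> bool) \<Rightarrow> (nat \<times> nat set) set" where
"AA j n P = {(s,D). 0<s \<and> finite D \<and> (\<forall>d\<in>D. s<d \<and> (odd d \<longleftrightarrow> \<not> odd s)) \<and> j*s + \<Sum>D = n \<and> P (card D)}"

lemma sum_mset_mset_set: "sum_mset (mset_set D) = (\<Sum>D::nat)"
  using sum_unfold_sum_mset[of id D] by simp

lemma filt: fixes s :: nat assumes "finite D" "\<forall>d\<in>D. s<d"
  shows "filter_mset (\<lambda>p. s < p) (replicate_mset j s + mset_set D) = mset_set D"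
proof -
  have r0: "filter_mset (\<lambda>p. s < p) (replicate_mset j s) = {#}"
    by auto
  have "{x \<in> D. s < x} = D" using assms by auto
  thus ?thesis using assms r0 by simp
qed

lemma decomp0:
  fixes \<pi> :: "nat multiset"
  assumes c: "count \<pi> s = j" and mn: "\<forall>p\<in>#\<pi>. s \<le> p" and L: "\<forall>p\<in>#\<pi>. s < p \<longrightarrow> count \<pi> p = 1"
  shows "\<pi> = replicate_mset j s + mset_set (set_mset (filter_mset (\<lambda>p. s < p) \<pi>))"
proof (rule multiset_eqI)
  fix x
  show "count \<pi> x = count (replicate_mset j s + mset_set (set_mset (filter_mset (\<lambda>p. s < p) \<pi>))) x"
  proof (cases "x = s")
    case True thus ?thesis using c by (simp add: count_mset_set')
  next
    case False
    show ?thesis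
    proof (cases "x \<in># \<pi>")
      case True
      hence "s < x" using mn False by force
      thus ?thesis using True False L by (simp add: count_mset_set')
    next
      case F2: False
      thus ?thesis using False by (simp add: count_mset_set' not_in_iff)
    qed
  qed
qed
lemma decomp:
  fixes \<pi> :: "nat multiset"
  assumes c: "count \<pi> (spart \<pi>) = j" and L: "\<forall>p\<in>#\<pi>. spart \<pi> < p \<longrightarrow> count \<pi> p = 1"
  shows "\<pi> = replicate_mset j (spart \<pi>) + mset_set (set_mset (filter_mset (\<lambda>p. spart \<pi> < p) \<pi>))"
  by (rule decomp0[OF c _ L]) (simp add: spart_def)

lemma finite_AA: assumes "0<j" shows "finite (AA j n P)"
proof -
  have "AA j n P \<subseteq> {..n} \<times> Pow {..n}"
  proof
    fix x assume "x \<in> AA j n P"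
    then obtain s D where x: "x = (s,D)" "finite D" "j*s + \<Sum>D = n" unfolding AA_def by auto
    have "s \<le> j*s" using assms by simp
    moreover have "\<forall>d\<in>D. d \<le> \<Sum>D" using x(2) by (auto intro: member_le_sum)
    ultimately have "s \<le> n" "D \<subseteq> {..n}" using x by (linarith, auto)
    thus "x \<in> {..n} \<times> Pow {..n}" using x by auto
  qed
  thus ?thesis by (rule finite_subset) auto
qed

lemma card_spt:
  assumes j: "0<j"
  shows "card {\<pi> \<in> spt_do j n. P (large_parts \<pi>)} = card (AA j n P)"
proof -
  define f where "f = (\<lambda>(s::nat,D). replicate_mset j s + mset_set D)"
  define g where "g = (\<lambda>\<pi>. (spart \<pi>, set_mset (filter_mset (\<lambda>p. spart \<pi> < p) \<pi>)))"
  have key: "spart (f (s,D)) = s \<and> filter_mset (\<lambda>p. s < p) (f (s,D)) = mset_set D"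
    if "(s,D) \<in> AA j n P" for s D
  proof -
    from that have fin: "finite D" and gt: "\<forall>d\<in>D. s<d" unfolding AA_def by auto
    have se: "set_mset (f (s,D)) = insert s D" using j fin unfolding f_def by auto
    have "Min (insert s D) = s" using fin gt by (simp add: Min_insert2 less_imp_le)
    moreover have "filter_mset (\<lambda>p. s < p) (f (s,D)) = mset_set D"
    proof -
      have r0: "filter_mset (\<lambda>p. s < p) (replicate_mset j s) = {#}"
        by (induct j) auto
      have "{x \<in> D. s < x} = D" using gt by auto
      thus ?thesis using fin r0 unfolding f_def by simp
    qed
    ultimately show ?thesis unfolding spart_def using se by simp
  qed
  have b: "bij_betw f (AA j n P) {\<pi> \<in> spt_do j n. P (large_parts \<pi>)}"
  proof (rule bij_betw_byWitness[where f'=g])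
    show "\<forall>a\<in>AA j n P. g (f a) = a"
    proof
      fix a assume a: "a \<in> AA j n P"
      obtain s D where sD: "a = (s,D)" by (cases a)
      have fin: "finite D" using a sD unfolding AA_def by auto
      show "g (f a) = a" using key[of s D] a sD fin unfolding g_def by simp
    qed
    show "\<forall>a'\<in>{\<pi> \<in> spt_do j n. P (large_parts \<pi>)}. f (g a') = a'"
    proof
      fix \<pi> assume "\<pi> \<in> {\<pi> \<in> spt_do j n. P (large_parts \<pi>)}"
      hence ne: "\<pi> \<noteq> {#}" and c: "count \<pi> (spart \<pi>) = j"
        and L: "\<forall>p\<in>#\<pi>. spart \<pi> < p \<longrightarrow> count \<pi> p = 1"
        unfolding spt_do_def by auto
      have mn: "\<forall>p\<in>#\<pi>. spart \<pi> \<le> p" unfolding spart_def by simp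
      show "f (g \<pi>) = \<pi>" using decomp[OF c] L unfolding f_def g_def by simp
    qed
    show "f ` AA j n P \<subseteq> {\<pi> \<in> spt_do j n. P (large_parts \<pi>)}"
    proof
      fix \<pi> assume "\<pi> \<in> f ` AA j n P"
      then obtain s D where sD: "(s,D) \<in> AA j n P" "\<pi> = f (s,D)" by auto
      have fin: "finite D" and gt: "\<forall>d\<in>D. s<d \<and> (odd d \<longleftrightarrow> \<not> odd s)" and s0: "0<s"
        and sm: "j*s + \<Sum>D = n" and P: "P (card D)"
        using sD(1) unfolding AA_def by auto
      have k: "spart \<pi> = s" "filter_mset (\<lambda>p. s < p) \<pi> = mset_set D" using key[OF sD(1)] sD(2) by auto
      have sD': "s \<notin> D" using gt by auto
      have pe: "\<pi> = replicate_mset j s + mset_set D" using sD(2) unfolding f_def by simp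
      have "set_mset \<pi> \<subseteq> insert s D" using pe fin by auto
      hence "\<forall>p\<in>#\<pi>. 0 < p" using s0 gt by fastforce
      moreover have "sum_mset \<pi> = n" using pe sm
        by (simp add: sum_mset_mset_set mult.commute)
      ultimately have "\<pi> \<in> partitions n" unfolding partitions_def by simp
      moreover have "\<pi> \<noteq> {#}" using j sD(2) unfolding f_def by auto
      moreover have "count \<pi> (spart \<pi>) = j" using k sD(2) sD' fin unfolding f_def
        by (simp add: count_mset_set')
      moreover have "\<forall>p\<in>#\<pi>. spart \<pi> < p \<longrightarrow> count \<pi> p = 1 \<and> (odd p \<longleftrightarrow> \<not> odd (spart \<pi>))"
      proof (intro ballI impI)
        fix p assume "p \<in># \<pi>" "spart \<pi> < p"
        hence pD: "p \<in> D" using k(1) pe fin by (auto split: if_splits)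
        show "count \<pi> p = 1 \<and> (odd p \<longleftrightarrow> \<not> odd (spart \<pi>))"
          using pD gt k(1) pe fin by (auto simp: count_mset_set')
      qed
      moreover have "P (large_parts \<pi>)" unfolding large_parts_def using k fin P by simp
      ultimately show "\<pi> \<in> {\<pi> \<in> spt_do j n. P (large_parts \<pi>)}" unfolding spt_do_def by auto
    qed
    show "g ` {\<pi> \<in> spt_do j n. P (large_parts \<pi>)} \<subseteq> AA j n P"
    proof
      fix a assume "a \<in> g ` {\<pi> \<in> spt_do j n. P (large_parts \<pi>)}"
      then obtain \<pi> where p: "\<pi> \<in> spt_do j n" "P (large_parts \<pi>)" "a = g \<pi>" by auto
      hence ne: "\<pi> \<noteq> {#}" and c: "count \<pi> (spart \<pi>) = j"
        and L: "\<forall>p\<in>#\<pi>. spart \<pi> < p \<longrightarrow> count \<pi> p = 1 \<and> (odd p \<longleftrightarrow> \<not> odd (spart \<pi>))"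
        and pp: "\<pi> \<in> partitions n"
        unfolding spt_do_def by auto
      define s where "s = spart \<pi>"
      define D where "D = set_mset (filter_mset (\<lambda>p. s < p) \<pi>)"
      have eq: "\<pi> = replicate_mset j s + mset_set D" using decomp[OF c] L unfolding s_def D_def by auto
      have fD: "finite D" unfolding D_def by simp
      have sin: "s \<in># \<pi>" using ne unfolding s_def spart_def by (simp add: Min_in)
      have s0: "0 < s" using pp sin unfolding partitions_def by auto
      have "sum_mset \<pi> = n" using pp unfolding partitions_def by auto
      hence sm: "j*s + \<Sum>D = n" using eq by (simp add: sum_mset_mset_set mult.commute)
      have gD: "\<forall>d\<in>D. s<d" unfolding D_def by auto
      have "filter_mset (\<lambda>p. s < p) \<pi> = mset_set D" using eq fD gD filt by metis
      hence "card D = large_parts \<pi>" unfolding large_parts_def s_def by (metis size_mset_set)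
      moreover have "\<forall>d\<in>D. s<d \<and> (odd d \<longleftrightarrow> \<not> odd s)" using L unfolding D_def s_def by auto
      moreover have "a = (s, D)" using p(3) unfolding g_def s_def D_def by simp
      ultimately show "a \<in> AA j n P" unfolding AA_def using fD s0 sm p(2) by auto
    qed
  qed
  show ?thesis using bij_betw_same_card[OF b] by simp
qed



lemma AA_zero: "0 < j \<Longrightarrow> AA j 0 P = {}"
  unfolding AA_def by auto

lemma B0_AA: "0 < j \<Longrightarrow> B0 j n = card (AA j (nat n) even)"
  unfolding B0_def using card_spt[of j "nat n" even] AA_zero[of j even] by auto

lemma B1_AA: "0 < j \<Longrightarrow> B1 j n = card (AA j (nat n) odd)"
  unfolding B1_def using card_spt[of j "nat n" odd] AA_zero[of j odd] by auto

lemma card_distinct_parts: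
  "card {\<pi> \<in> partitions n. \<forall>p\<in>#\<pi>. Q p \<and> count \<pi> p = 1}
   = card {D. finite D \<and> (\<forall>d\<in>D. Q d \<and> 0 < d) \<and> \<Sum>D = n}"
proof (rule bij_betw_same_card[of set_mset])
  show "bij_betw set_mset {\<pi> \<in> partitions n. \<forall>p\<in>#\<pi>. Q p \<and> count \<pi> p = 1}
    {D. finite D \<and> (\<forall>d\<in>D. Q d \<and> 0 < d) \<and> \<Sum>D = n}"
  proof (rule bij_betw_byWitness[where f'=mset_set])
    have eq: "mset_set (set_mset \<pi>) = \<pi>" if "\<forall>p\<in>#\<pi>. count \<pi> p = 1" for \<pi> :: "nat multiset"
    proof (rule multiset_eqI)
      fix x show "count (mset_set (set_mset \<pi>)) x = count \<pi> x"
        using that by (cases "x \<in># \<pi>") (auto simp: count_mset_set' not_in_iff)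
    qed
    show "\<forall>a\<in>{\<pi> \<in> partitions n. \<forall>p\<in>#\<pi>. Q p \<and> count \<pi> p = 1}. mset_set (set_mset a) = a"
      using eq by auto
    show "\<forall>a'\<in>{D. finite D \<and> (\<forall>d\<in>D. Q d \<and> 0 < d) \<and> \<Sum>D = n}. set_mset (mset_set a') = a'"
      by auto
    show "set_mset ` {\<pi> \<in> partitions n. \<forall>p\<in>#\<pi>. Q p \<and> count \<pi> p = 1}
      \<subseteq> {D. finite D \<and> (\<forall>d\<in>D. Q d \<and> 0 < d) \<and> \<Sum>D = n}"
    proof
      fix D assume "D \<in> set_mset ` {\<pi> \<in> partitions n. \<forall>p\<in>#\<pi>. Q p \<and> count \<pi> p = 1}"
      then obtain \<pi> where p: "\<pi> \<in> partitions n" "\<forall>p\<in>#\<pi>. Q p \<and> count \<pi> p = 1" "D = set_mset \<pi>" by auto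
      have "\<Sum>D = sum_mset \<pi>" using eq[of \<pi>] p(2,3) sum_mset_mset_set[of D] by auto
      thus "D \<in> {D. finite D \<and> (\<forall>d\<in>D. Q d \<and> 0 < d) \<and> \<Sum>D = n}"
        using p unfolding partitions_def by auto
    qed
    show "mset_set ` {D. finite D \<and> (\<forall>d\<in>D. Q d \<and> 0 < d) \<and> \<Sum>D = n}
      \<subseteq> {\<pi> \<in> partitions n. \<forall>p\<in>#\<pi>. Q p \<and> count \<pi> p = 1}"
      unfolding partitions_def by (auto simp: sum_mset_mset_set)
  qed
qed

lemma odd_sum_parity:
  fixes F :: "nat set"
  shows "finite F \<Longrightarrow> \<forall>x\<in>F. odd x \<Longrightarrow> even (\<Sum>F) = even (card F)"
  by (induct F rule: finite_induct) auto

lemma finite_sumsets: "finite {D::nat set. finite D \<and> R D \<and> c + \<Sum>D = m}"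
proof (rule finite_subset[of _ "Pow {..m}"])
  show "{D::nat set. finite D \<and> R D \<and> c + \<Sum>D = m} \<subseteq> Pow {..m}"
  proof
    fix D assume D: "D \<in> {D::nat set. finite D \<and> R D \<and> c + \<Sum>D = m}"
    have "\<forall>d\<in>D. d \<le> \<Sum>D" using D by (auto intro: member_le_sum)
    thus "D \<in> Pow {..m}" using D by auto
  qed
qed auto

lemma split3: fixes S :: "(nat \<times> 'b) set"
  assumes "finite S" "\<forall>x\<in>S. 0 < fst x"
  shows "card S = card {x\<in>S. fst x = 1} + card {x\<in>S. fst x = 2} + card {x\<in>S. 3 \<le> fst x}"
proof -
  have "S = ({x\<in>S. fst x = 1} \<union> {x\<in>S. fst x = 2}) \<union> {x\<in>S. 3 \<le> fst x}" using assms(2) by force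
  moreover have "({x\<in>S. fst x = 1} \<union> {x\<in>S. fst x = 2}) \<inter> {x\<in>S. 3 \<le> fst x} = {}" by auto
  ultimately have "card S = card ({x\<in>S. fst x = 1} \<union> {x\<in>S. fst x = 2}) + card {x\<in>S. 3 \<le> fst x}"
    using assms(1) by (metis (no_types, lifting) card_Un_disjoint finite_Un)
  also have "card ({x\<in>S. fst x = 1} \<union> {x\<in>S. fst x = 2}) = card {x\<in>S. fst x = 1} + card {x\<in>S. fst x = 2}"
    using assms(1) by (intro card_Un_disjoint) auto
  finally show ?thesis .
qed

lemma split2:
  assumes "finite S"
  shows "card S = card {x\<in>S. Q x} + card {x\<in>S. \<not> Q x}"
proof -
  have "S = {x\<in>S. Q x} \<union> {x\<in>S. \<not> Q x}" by auto
  moreover have "{x\<in>S. Q x} \<inter> {x\<in>S. \<not> Q x} = {}" by auto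
  ultimately show ?thesis using assms by (metis (no_types, lifting) card_Un_disjoint finite_Un)
qed



lemma mem_AA: "(s,D) \<in> AA j n P \<longleftrightarrow> 0<s \<and> finite D \<and> (\<forall>d\<in>D. s<d \<and> (odd d \<longleftrightarrow> \<not> odd s)) \<and> j*s + \<Sum>D = n \<and> P (card D)"
  by (simp add: AA_def)

lemma mem_Pair_image: "(a,b) \<in> Pair c ` B \<longleftrightarrow> a = c \<and> b \<in> B" by auto

lemma part_a:
  fixes k t :: nat
  defines "E \<equiv> {D::nat set. finite D \<and> (\<forall>d\<in>D. even d \<and> 0 < d) \<and> k + \<Sum>D = 2*t}"
  shows "card {x\<in>AA k (2*t) even. fst x = 1} + card {x\<in>AA (k+1) (2*t+1) odd. fst x = 1} = card E"
proof -
  have ev: "(1 < d \<and> (odd d \<longleftrightarrow> \<not> odd (1::nat))) \<longleftrightarrow> (even d \<and> 0 < d)" for d :: nat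
    by (cases "d=1") auto
  have evD: "(\<forall>d\<in>D. 1<d \<and> (odd d \<longleftrightarrow> \<not> odd (1::nat))) \<longleftrightarrow> (\<forall>d\<in>D. even d \<and> 0<d)" for D :: "nat set"
  proof (intro iffI ballI)
    fix d assume a: "\<forall>d\<in>D. 1<d \<and> (odd d \<longleftrightarrow> \<not> odd (1::nat))" and d: "d \<in> D"
    from a d have "1<d \<and> (odd d \<longleftrightarrow> \<not> odd (1::nat))" by (rule bspec)
    thus "even d \<and> 0<d" by (rule ev[THEN iffD1])
  next
    fix d assume a: "\<forall>d\<in>D. even d \<and> 0<d" and d: "d \<in> D"
    from a d have "even d \<and> 0<d" by (rule bspec)
    thus "1<d \<and> (odd d \<longleftrightarrow> \<not> odd (1::nat))" by (rule ev[THEN iffD2])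
  qed
  have e1: "{x\<in>AA k (2*t) even. fst x = 1} = Pair 1 ` {D\<in>E. even (card D)}"
  proof (rule set_eqI)
    fix x :: "nat \<times> nat set" obtain s D where x: "x = (s,D)" by (cases x)
    show "x \<in> {x\<in>AA k (2*t) even. fst x = 1} \<longleftrightarrow> x \<in> Pair 1 ` {D\<in>E. even (card D)}"
    proof
      assume "x \<in> {x\<in>AA k (2*t) even. fst x = 1}"
      hence "(1,D) \<in> AA k (2*t) even" "s = 1" using x by auto
      hence "finite D" "\<forall>d\<in>D. 1<d \<and> (odd d \<longleftrightarrow> \<not> odd (1::nat))" "k + \<Sum>D = 2*t" "even (card D)"
        unfolding mem_AA by auto
      hence "D \<in> {D\<in>E. even (card D)}" using evD[of D] unfolding E_def by blast
      thus "x \<in> Pair 1 ` {D\<in>E. even (card D)}" using x \<open>s=1\<close> by blast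
    next
      assume "x \<in> Pair 1 ` {D\<in>E. even (card D)}"
      hence "s = 1" "D \<in> E" "even (card D)" using x by auto
      hence "(1,D) \<in> AA k (2*t) even" using evD[of D] unfolding E_def mem_AA by auto
      thus "x \<in> {x\<in>AA k (2*t) even. fst x = 1}" using x \<open>s=1\<close> by auto
    qed
  qed
  have e2: "{x\<in>AA (k+1) (2*t+1) odd. fst x = 1} = Pair 1 ` {D\<in>E. \<not> even (card D)}"
  proof (rule set_eqI)
    fix x :: "nat \<times> nat set" obtain s D where x: "x = (s,D)" by (cases x)
    show "x \<in> {x\<in>AA (k+1) (2*t+1) odd. fst x = 1} \<longleftrightarrow> x \<in> Pair 1 ` {D\<in>E. \<not> even (card D)}"
    proof
      assume "x \<in> {x\<in>AA (k+1) (2*t+1) odd. fst x = 1}"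
      hence "(1,D) \<in> AA (k+1) (2*t+1) odd" "s = 1" using x by auto
      hence "finite D" "\<forall>d\<in>D. 1<d \<and> (odd d \<longleftrightarrow> \<not> odd (1::nat))" "(k+1)*1 + \<Sum>D = 2*t+1" "odd (card D)"
        unfolding mem_AA by auto
      hence "D \<in> {D\<in>E. \<not> even (card D)}" using evD[of D] unfolding E_def by simp
      thus "x \<in> Pair 1 ` {D\<in>E. \<not> even (card D)}" using x \<open>s=1\<close> by blast
    next
      assume "x \<in> Pair 1 ` {D\<in>E. \<not> even (card D)}"
      hence "s = 1" "D \<in> E" "\<not> even (card D)" using x by auto
      hence "(1,D) \<in> AA (k+1) (2*t+1) odd" using evD[of D] unfolding E_def mem_AA by auto
      thus "x \<in> {x\<in>AA (k+1) (2*t+1) odd. fst x = 1}" using x \<open>s=1\<close> by auto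
    qed
  qed
  have "card E = card {D\<in>E. even (card D)} + card {D\<in>E. \<not> even (card D)}"
    by (rule split2) (unfold E_def, rule finite_sumsets)
  moreover have "inj (Pair (1::nat) :: nat set \<Rightarrow> _)" by (auto intro: injI)
  ultimately show ?thesis unfolding e1 e2 by (simp add: card_image inj_on_subset)
qed

lemma part_b:
  fixes k t :: nat
  defines "Od \<equiv> {D::nat set. finite D \<and> (\<forall>d\<in>D. odd d) \<and> 2*k + \<Sum>D = 2*t}"
  shows "card {x\<in>AA k (2*t) even. fst x = 2} + card {x\<in>AA (k+1) (2*t+1) odd. fst x = 2} = card Od"
proof -
  have ev: "(2 < d \<and> (odd d \<longleftrightarrow> \<not> odd (2::nat))) \<longleftrightarrow> (odd d \<and> d \<noteq> 1)" for d :: nat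
    by (cases "d=0"; cases "d=2") auto
  have evD: "(\<forall>d\<in>D. 2<d \<and> (odd d \<longleftrightarrow> \<not> odd (2::nat))) \<longleftrightarrow> (\<forall>d\<in>D. odd d \<and> d \<noteq> 1)" for D :: "nat set"
  proof (intro iffI ballI)
    fix d assume a: "\<forall>d\<in>D. 2<d \<and> (odd d \<longleftrightarrow> \<not> odd (2::nat))" and d: "d \<in> D"
    from a d have "2<d \<and> (odd d \<longleftrightarrow> \<not> odd (2::nat))" by (rule bspec)
    thus "odd d \<and> d \<noteq> 1" by (rule ev[THEN iffD1])
  next
    fix d assume a: "\<forall>d\<in>D. odd d \<and> d \<noteq> 1" and d: "d \<in> D"
    from a d have "odd d \<and> d \<noteq> 1" by (rule bspec)
    thus "2<d \<and> (odd d \<longleftrightarrow> \<not> odd (2::nat))" by (rule ev[THEN iffD2])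
  qed
  have par: "even (card F)" if "F \<in> Od" for F
  proof -
    have fin: "finite F" and o: "\<forall>x\<in>F. odd x" and sm: "2*k + \<Sum>F = 2*t" using that unfolding Od_def by auto
    have "\<Sum>F = 2*(t-k)" using sm by simp
    hence "even (\<Sum>F)" by simp
    thus ?thesis using odd_sum_parity[OF fin o] by simp
  qed
  have e1: "{x\<in>AA k (2*t) even. fst x = 2} = Pair 2 ` {F\<in>Od. 1 \<notin> F}"
  proof (rule set_eqI)
    fix x :: "nat \<times> nat set" obtain s D where x: "x = (s,D)" by (cases x)
    show "x \<in> {x\<in>AA k (2*t) even. fst x = 2} \<longleftrightarrow> x \<in> Pair 2 ` {F\<in>Od. 1 \<notin> F}"
    proof
      assume "x \<in> {x\<in>AA k (2*t) even. fst x = 2}"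
      hence "(2,D) \<in> AA k (2*t) even" "s = 2" using x by auto
      hence "finite D" "\<forall>d\<in>D. 2<d \<and> (odd d \<longleftrightarrow> \<not> odd (2::nat))" "k*2 + \<Sum>D = 2*t"
        unfolding mem_AA by auto
      hence "D \<in> {F\<in>Od. 1 \<notin> F}" using evD[of D] unfolding Od_def by auto
      thus "x \<in> Pair 2 ` {F\<in>Od. 1 \<notin> F}" using x \<open>s=2\<close> by blast
    next
      assume "x \<in> Pair 2 ` {F\<in>Od. 1 \<notin> F}"
      hence "s = 2" "D \<in> Od" "1 \<notin> D" using x by auto
      moreover have "even (card D)" using par \<open>D \<in> Od\<close> by blast
      ultimately have "(2,D) \<in> AA k (2*t) even" using evD[of D] unfolding Od_def mem_AA by auto
      thus "x \<in> {x\<in>AA k (2*t) even. fst x = 2}" using x \<open>s=2\<close> by auto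
    qed
  qed
  have e2: "{x\<in>AA (k+1) (2*t+1) odd. fst x = 2} = (\<lambda>F. (2, F - {1})) ` {F\<in>Od. 1 \<in> F}"
  proof
    show "{x\<in>AA (k+1) (2*t+1) odd. fst x = 2} \<subseteq> (\<lambda>F. (2, F - {1})) ` {F\<in>Od. 1 \<in> F}"
    proof
      fix x :: "nat \<times> nat set" assume x: "x \<in> {x\<in>AA (k+1) (2*t+1) odd. fst x = 2}"
      obtain s D where xs: "x = (s,D)" by (cases x)
      hence "(2,D) \<in> AA (k+1) (2*t+1) odd" "s = 2" using x by auto
      hence D: "finite D" "\<forall>d\<in>D. 2<d \<and> (odd d \<longleftrightarrow> \<not> odd (2::nat))" "(k+1)*2 + \<Sum>D = 2*t+1"
        unfolding mem_AA by auto
      have D2: "\<forall>d\<in>D. odd d \<and> d \<noteq> 1" using D(2) evD[of D] by simp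
      have "1 \<notin> D" using D2 by auto
      hence "\<Sum>(insert 1 D) = 1 + \<Sum>D" using D(1) by simp
      hence "insert 1 D \<in> Od" using D D2 unfolding Od_def by auto
      moreover have "x = (2, insert 1 D - {1})" using xs \<open>s=2\<close> \<open>1 \<notin> D\<close> by auto
      ultimately show "x \<in> (\<lambda>F. (2, F - {1})) ` {F\<in>Od. 1 \<in> F}" by blast
    qed
    show "(\<lambda>F. (2, F - {1})) ` {F\<in>Od. 1 \<in> F} \<subseteq> {x\<in>AA (k+1) (2*t+1) odd. fst x = 2}"
    proof
      fix x :: "nat \<times> nat set" assume "x \<in> (\<lambda>F. (2, F - {1})) ` {F\<in>Od. 1 \<in> F}"
      then obtain F where F: "x = (2,F-{1})" "F \<in> Od" "1 \<in> F" by auto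
      have fin: "finite F" and o: "\<forall>d\<in>F. odd d" and sm: "2*k + \<Sum>F = 2*t"
        using F(2) unfolding Od_def by auto
      have s: "\<Sum>F = 1 + \<Sum>(F-{1})" using fin F(3) by (simp add: sum.remove)
      have c: "card F = Suc (card (F - {1}))" by (rule card.remove[OF fin F(3)])
      have "odd (card (F-{1}))" using par[OF F(2)] c by simp
      moreover have "(k+1)*2 + \<Sum>(F-{1}) = 2*t+1" using sm s by simp
      moreover have "\<forall>d\<in>F-{1}. 2 < d \<and> (odd d \<longleftrightarrow> \<not> odd (2::nat))"
        using o evD[of "F-{1}"] by simp
      ultimately have "(2,F-{1}) \<in> AA (k+1) (2*t+1) odd"
        using fin unfolding mem_AA by auto
      thus "x \<in> {x\<in>AA (k+1) (2*t+1) odd. fst x = 2}" using F(1) by simp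
    qed
  qed
  have "card Od = card {F\<in>Od. 1 \<notin> F} + card {F\<in>Od. \<not> 1 \<notin> F}"
    by (rule split2) (unfold Od_def, rule finite_sumsets)
  moreover have "inj (Pair (2::nat) :: nat set \<Rightarrow> _)" by (auto intro: injI)
  moreover have "inj_on (\<lambda>F. (2::nat, F - {1::nat})) {F\<in>Od. 1 \<in> F}"
  proof (rule inj_onI)
    fix F G assume "F \<in> {F\<in>Od. 1 \<in> F}" "G \<in> {F\<in>Od. 1 \<in> F}" "(2::nat, F - {1::nat}) = (2, G - {1})"
    thus "F = G" by (metis (no_types, lifting) insert_Diff mem_Collect_eq prod.inject)
  qed
  ultimately show ?thesis unfolding e1 e2 by (simp add: card_image inj_on_subset)
qed

lemma part_c:
  fixes k t :: nat
  assumes k: "1 \<le> k"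
  shows "card (AA k (nat (2 * int t - 2 * int k)) even)
    = card {x\<in>AA k (2*t) even. 3 \<le> fst x} + card {x\<in>AA (k+1) (2*t+1) odd. 3 \<le> fst x}"
proof -
  define A where "A = AA k (nat (2 * int t - 2 * int k)) even"
  define X where "X = {(s,D). 2<s \<and> finite D \<and> (\<forall>d\<in>D. s-2<d \<and> (odd d \<longleftrightarrow> \<not> odd s)) \<and> k*s + \<Sum>D = 2*t \<and> even (card D)}"
  have natc: "nat (2 * int t - 2 * int k) = 2*t - 2*k" by simp
  have memX: "(s,D) \<in> X \<longleftrightarrow> 2<s \<and> finite D \<and> (\<forall>d\<in>D. s-2<d \<and> (odd d \<longleftrightarrow> \<not> odd s)) \<and> k*s + \<Sum>D = 2*t \<and> even (card D)" for s D
    unfolding X_def by simp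
  have notin: "s-1 \<notin> D" if "\<forall>d\<in>D. s<d" for s :: nat and D
  proof
    assume "s-1 \<in> D" with that have "s < s-1" by blast
    thus False by simp
  qed
  define f :: "nat \<times> nat set \<Rightarrow> nat \<times> nat set" where "f = (\<lambda>(s,D). (s+2,D))"
  define g :: "nat \<times> nat set \<Rightarrow> nat \<times> nat set" where "g = (\<lambda>(s,D). (s-2,D))"
  have b1: "bij_betw f A X"
  proof (rule bij_betw_byWitness[where f'=g])
    show "\<forall>a\<in>A. g (f a) = a" unfolding f_def g_def by auto
    show "\<forall>a\<in>X. f (g a) = a"
    proof
      fix a assume "a \<in> X"
      moreover obtain s D where "a = (s,D)" by (cases a)
      ultimately show "f (g a) = a" unfolding f_def g_def using memX by auto
    qed
    show "f ` A \<subseteq> X"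
    proof
      fix y assume "y \<in> f ` A"
      then obtain s D where y: "y = (s+2, D)" "(s,D) \<in> A" unfolding f_def by auto
      hence m: "0<s" "finite D" "\<forall>d\<in>D. s<d \<and> (odd d \<longleftrightarrow> \<not> odd s)" "k*s + \<Sum>D = 2*t - 2*k" "even (card D)"
        unfolding A_def mem_AA natc by auto
      have "k*s > 0" using m(1) k by simp
      hence "k*s + \<Sum>D + 2*k = 2*t" using m(4) by linarith
      hence "k*(s+2) + \<Sum>D = 2*t" by (simp add: algebra_simps)
      thus "y \<in> X" unfolding memX y(1) using m by auto
    qed
    show "g ` X \<subseteq> A"
    proof
      fix y assume "y \<in> g ` X"
      then obtain s D where y: "y = (s-2, D)" "(s,D) \<in> X" unfolding g_def by auto
      hence m: "2<s" "finite D" "\<forall>d\<in>D. s-2<d \<and> (odd d \<longleftrightarrow> \<not> odd s)" "k*s + \<Sum>D = 2*t" "even (card D)"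
        unfolding memX by auto
      have "k*s = k*(s-2) + 2*k" using m(1) by (simp add: algebra_simps diff_mult_distrib2)
      hence "k*(s-2) + \<Sum>D = 2*t - 2*k" using m(4) by linarith
      moreover have "\<forall>d\<in>D. s-2<d \<and> (odd d \<longleftrightarrow> \<not> odd (s-2))" using m(1,3) by auto
      ultimately show "y \<in> A" unfolding A_def mem_AA natc y(1) using m by auto
    qed
  qed
  have finX: "finite X" using bij_betw_finite[OF b1] finite_AA[of k] k unfolding A_def by auto
  have c1: "card A = card X" by (rule bij_betw_same_card[OF b1])
  have c2: "card X = card {x\<in>X. fst x - 1 \<notin> snd x} + card {x\<in>X. \<not> fst x - 1 \<notin> snd x}"
    by (rule split2[OF finX])
  have e1: "{x\<in>X. fst x - 1 \<notin> snd x} = {x\<in>AA k (2*t) even. 3 \<le> fst x}"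
  proof (rule set_eqI)
    fix x :: "nat \<times> nat set" obtain s D where x: "x = (s,D)" by (cases x)
    show "x \<in> {x\<in>X. fst x - 1 \<notin> snd x} \<longleftrightarrow> x \<in> {x\<in>AA k (2*t) even. 3 \<le> fst x}"
    proof
      assume "x \<in> {x\<in>X. fst x - 1 \<notin> snd x}"
      hence m: "2<s" "finite D" "\<forall>d\<in>D. s-2<d \<and> (odd d \<longleftrightarrow> \<not> odd s)" "k*s + \<Sum>D = 2*t" "even (card D)"
        "s - 1 \<notin> D" unfolding x by (auto simp: memX)
      have "\<forall>d\<in>D. s<d"
      proof
        fix d assume d: "d \<in> D"
        hence "s-2<d" "d \<noteq> s-1" "d \<noteq> s" using m(3,6) by auto
        thus "s<d" by linarith
      qed
      hence "(s,D) \<in> AA k (2*t) even" unfolding mem_AA using m by auto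
      thus "x \<in> {x\<in>AA k (2*t) even. 3 \<le> fst x}" using x m(1) by auto
    next
      assume "x \<in> {x\<in>AA k (2*t) even. 3 \<le> fst x}"
      hence "(s,D) \<in> AA k (2*t) even" "3 \<le> s" using x by auto
      hence m: "3\<le>s" "finite D" "\<forall>d\<in>D. s<d \<and> (odd d \<longleftrightarrow> \<not> odd s)" "k*s + \<Sum>D = 2*t" "even (card D)"
        unfolding mem_AA by auto
      have "s - 1 \<notin> D" by (rule notin) (use m(3) in auto)
      moreover have "\<forall>d\<in>D. s-2<d \<and> (odd d \<longleftrightarrow> \<not> odd s)"
      proof
        fix d assume "d \<in> D"
        with m(3) have "s<d \<and> (odd d \<longleftrightarrow> \<not> odd s)" by (rule bspec)
        thus "s-2<d \<and> (odd d \<longleftrightarrow> \<not> odd s)" by linarith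
      qed
      hence "(s,D) \<in> X" unfolding memX using m(1,2,4,5) by simp
      ultimately show "x \<in> {x\<in>X. fst x - 1 \<notin> snd x}" unfolding x by simp
    qed
  qed
  define h :: "nat \<times> nat set \<Rightarrow> nat \<times> nat set" where "h = (\<lambda>(s,D). (s, insert (s-1) D))"
  define AO3 where "AO3 = {x\<in>AA (k+1) (2*t+1) odd. 3 \<le> fst x}"
  have e2: "{x\<in>X. \<not> fst x - 1 \<notin> snd x} = h ` AO3"
  proof (rule set_eqI)
    fix x :: "nat \<times> nat set" obtain s F where x: "x = (s,F)" by (cases x)
    show "x \<in> {x\<in>X. \<not> fst x - 1 \<notin> snd x} \<longleftrightarrow> x \<in> h ` AO3"
    proof
      assume "x \<in> {x\<in>X. \<not> fst x - 1 \<notin> snd x}"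
      hence m: "2<s" "finite F" "\<forall>d\<in>F. s-2<d \<and> (odd d \<longleftrightarrow> \<not> odd s)" "k*s + \<Sum>F = 2*t" "even (card F)"
        "s - 1 \<in> F" unfolding x by (auto simp: memX)
      define D where "D = F - {s-1}"
      have fD: "finite D" using m(2) unfolding D_def by simp
      have FD: "F = insert (s-1) D" using m(6) unfolding D_def by auto
      have nD: "s-1 \<notin> D" unfolding D_def by simp
      have gt: "\<forall>d\<in>D. s<d \<and> (odd d \<longleftrightarrow> \<not> odd s)"
      proof
        fix d assume d: "d \<in> D"
        hence "s-2<d" "d \<noteq> s-1" "d \<noteq> s" "odd d \<longleftrightarrow> \<not> odd s" using m(3) unfolding D_def by auto
        thus "s<d \<and> (odd d \<longleftrightarrow> \<not> odd s)" by auto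
      qed
      have sm: "\<Sum>F = (s-1) + \<Sum>D" using FD fD nD by simp
      have cd: "card F = Suc (card D)" using FD fD nD by simp
      have "(k+1)*s + \<Sum>D = 2*t+1" using m(1,4) sm by (simp add: algebra_simps)
      hence "(s,D) \<in> AA (k+1) (2*t+1) odd" unfolding mem_AA using m(1,5) fD gt cd by auto
      hence "(s,D) \<in> AO3" unfolding AO3_def using m(1) by simp
      moreover have "x = h (s,D)" unfolding h_def x FD by simp
      ultimately show "x \<in> h ` AO3" by blast
    next
      assume "x \<in> h ` AO3"
      then obtain s' D where y: "x = h (s',D)" "(s',D) \<in> AO3" by auto
      hence "(s',D) \<in> AA (k+1) (2*t+1) odd" "3 \<le> s'" unfolding AO3_def by auto
      hence m: "3\<le>s'" "finite D" "\<forall>d\<in>D. s'<d \<and> (odd d \<longleftrightarrow> \<not> odd s')" "(k+1)*s' + \<Sum>D = 2*t+1" "odd (card D)"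
        unfolding mem_AA by auto
      have sF: "s = s'" "F = insert (s'-1) D" using y(1) x unfolding h_def by auto
      have nD: "s'-1 \<notin> D" by (rule notin) (use m(3) in auto)
      have sm: "\<Sum>F = (s'-1) + \<Sum>D" using sF nD m(2) by simp
      have cd: "card F = Suc (card D)" using sF nD m(2) by simp
      have "k*s' + \<Sum>F = 2*t" using m(1,4) sm by (simp add: algebra_simps)
      moreover have "\<forall>d\<in>F. s'-2<d \<and> (odd d \<longleftrightarrow> \<not> odd s')"
      proof
        fix d assume "d \<in> F"
        hence "d = s'-1 \<or> d \<in> D" using sF(2) by simp
        thus "s'-2<d \<and> (odd d \<longleftrightarrow> \<not> odd s')"
        proof
          assume "d = s'-1" thus ?thesis using m(1) by auto
        next
          assume "d \<in> D"
          with m(3) have "s'<d \<and> (odd d \<longleftrightarrow> \<not> odd s')" by (rule bspec)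
          thus ?thesis by linarith
        qed
      qed
      ultimately have "(s',F) \<in> X" unfolding memX
        using m(1,2,5) cd sF(2) by auto
      thus "x \<in> {x\<in>X. \<not> fst x - 1 \<notin> snd x}" unfolding x sF(1) using sF(2) by simp
    qed
  qed
  have inj: "inj_on h AO3"
  proof (rule inj_onI)
    fix a b assume a: "a \<in> AO3" and b: "b \<in> AO3" and e: "h a = h b"
    obtain s D where a': "a = (s,D)" by (cases a)
    obtain s' D' where b': "b = (s',D')" by (cases b)
    have "(s,D) \<in> AA (k+1) (2*t+1) odd" using a a' unfolding AO3_def by auto
    hence "s-1 \<notin> D" by (intro notin) (auto simp: mem_AA)
    moreover have "(s',D') \<in> AA (k+1) (2*t+1) odd" using b b' unfolding AO3_def by auto
    hence "s'-1 \<notin> D'" by (intro notin) (auto simp: mem_AA)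
    moreover have "s = s'" "insert (s-1) D = insert (s'-1) D'" using e a' b' unfolding h_def by auto
    ultimately show "a = b" using a' b' by (metis Diff_insert_absorb)
  qed
  show ?thesis using c1 c2 e1 e2 card_image[OF inj] unfolding A_def AO3_def by simp
qed

lemma AA_fst_pos: "\<forall>x\<in>AA j n P. 0 < fst x"
  unfolding AA_def by auto

lemma pde_eq:
  fixes k t :: nat
  shows "p_de (2 * int t - int k) = card {D::nat set. finite D \<and> (\<forall>d\<in>D. even d \<and> 0 < d) \<and> k + \<Sum>D = 2*t}"
proof (cases "k \<le> 2*t")
  case True
  hence n: "nat (2 * int t - int k) = 2*t - k" by simp
  have "{D::nat set. finite D \<and> (\<forall>d\<in>D. even d \<and> 0 < d) \<and> k + \<Sum>D = 2*t}
      = {D. finite D \<and> (\<forall>d\<in>D. even d \<and> 0 < d) \<and> \<Sum>D = 2*t - k}" using True by auto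
  thus ?thesis unfolding p_de_def using True n card_distinct_parts[of "2*t-k" even] by simp
next
  case False
  hence "{D::nat set. finite D \<and> (\<forall>d\<in>D. even d \<and> 0 < d) \<and> k + \<Sum>D = 2*t} = {}" by auto
  thus ?thesis unfolding p_de_def using False by simp
qed

lemma pdo_eq:
  fixes k t :: nat
  shows "p_do (2 * int t - 2 * int k) = card {D::nat set. finite D \<and> (\<forall>d\<in>D. odd d) \<and> 2*k + \<Sum>D = 2*t}"
proof (cases "k \<le> t")
  case True
  hence n: "nat (2 * int t - 2 * int k) = 2*t - 2*k" by simp
  have "{D::nat set. finite D \<and> (\<forall>d\<in>D. odd d) \<and> 2*k + \<Sum>D = 2*t}
      = {D. finite D \<and> (\<forall>d\<in>D. odd d \<and> 0 < d) \<and> \<Sum>D = 2*t - 2*k}"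
  proof (rule Collect_cong)
    fix D :: "nat set"
    have a: "(\<forall>d\<in>D. odd d) \<longleftrightarrow> (\<forall>d\<in>D. odd d \<and> 0 < d)" using odd_pos by blast
    have b: "(2*k + \<Sum>D = 2*t) \<longleftrightarrow> (\<Sum>D = 2*t - 2*k)" using True by linarith
    show "(finite D \<and> (\<forall>d\<in>D. odd d) \<and> 2*k + \<Sum>D = 2*t) \<longleftrightarrow> (finite D \<and> (\<forall>d\<in>D. odd d \<and> 0 < d) \<and> \<Sum>D = 2*t - 2*k)"
      using a b by blast
  qed
  thus ?thesis unfolding p_do_def using True n card_distinct_parts[of "2*t-2*k" odd] by simp
next
  case False
  hence "{D::nat set. finite D \<and> (\<forall>d\<in>D. odd d) \<and> 2*k + \<Sum>D = 2*t} = {}" by auto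
  thus ?thesis unfolding p_do_def using False by simp
qed

theorem lemma4:
  fixes k t :: nat
  assumes "1 \<le> k" and "1 \<le> t"
  shows "B0 k (2 * int t) + B1 (k + 1) (2 * int t + 1)
         = B0 k (2 * int t - 2 * int k) + p_de (2 * int t - int k) + p_do (2 * int t - 2 * int k)"
proof -
  have k0: "0 < k" using assms(1) by simp
  have h1: "B0 k (2 * int t) = card (AA k (2*t) even)"
    using B0_AA[OF k0, of "2 * int t"] by (simp add: nat_mult_distrib)
  have h2: "B1 (k + 1) (2 * int t + 1) = card (AA (k+1) (2*t+1) odd)"
  proof -
    have "nat (2 * int t + 1) = 2*t+1" by simp
    thus ?thesis using B1_AA[of "k+1" "2 * int t + 1"] by simp
  qed
  have h3: "B0 k (2 * int t - 2 * int k) = card (AA k (nat (2 * int t - 2 * int k)) even)"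
    by (rule B0_AA[OF k0])
  have s1: "card (AA k (2*t) even) = card {x\<in>AA k (2*t) even. fst x = 1} + card {x\<in>AA k (2*t) even. fst x = 2}
      + card {x\<in>AA k (2*t) even. 3 \<le> fst x}"
    by (rule split3[OF finite_AA[OF k0] AA_fst_pos])
  have s2: "card (AA (k+1) (2*t+1) odd) = card {x\<in>AA (k+1) (2*t+1) odd. fst x = 1} + card {x\<in>AA (k+1) (2*t+1) odd. fst x = 2}
      + card {x\<in>AA (k+1) (2*t+1) odd. 3 \<le> fst x}"
    by (rule split3[OF finite_AA AA_fst_pos]) simp
  show ?thesis
    using h1 h2 h3 s1 s2 part_a[of k t] part_b[of k t] part_c[OF assms(1), of t] pde_eq[of t k] pdo_eq[of t k]
    by linarith
qed

end
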